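(* Let $\operatorname{BTTB}_{n,k}(\mathbb{C})=\operatorname{Toep}_n(\mathbb{C})\circledast\operatorname{Toep}_k(\mathbb{C})$ be the space of $nk\times nk$ block-Toeplitz matrices with $n\times n$ blocks, each block a $k\times k$ Toeplitz matrix. The structure tensor of the matrix-vector product $\operatorname{BTTB}_{n,k}(\mathbb{C})\times\mathbb{C}^{nk}\to\mathbb{C}^{nk}$ has rank $(2k-1)(2n-1)$.
   Context: $\operatorname{Toep}_m(\mathbb{C})$ is the space of $m\times m$ Toeplitz matrices ($(i,j)$ entry depending only on $j-i$); $\circledast$ denotes the span of Kronecker products. Structure tensor of a bilinear map $\beta:U\times V\to W$: the unique $\mu_\beta\in U^*\otimes V^*\otimes W$ with $\beta(u,v)=\mu_\beta(u,v,\cdot)$. Rank: least number of decomposable tensors summing to the tensor. *)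

theory Defs
  imports Complex_Main
begin

definition tensor_rank ::
  "'a set \<Rightarrow> 'b set \<Rightarrow> 'c set \<Rightarrow> ('a \<Rightarrow> 'b \<Rightarrow> 'c \<Rightarrow> complex) \<Rightarrow> nat" where
  "tensor_rank A B C T =
     (LEAST r. \<exists>(x :: nat \<Rightarrow> 'a \<Rightarrow> complex) (y :: nat \<Rightarrow> 'b \<Rightarrow> complex)
                 (z :: nat \<Rightarrow> 'c \<Rightarrow> complex).
        \<forall>a\<in>A. \<forall>b\<in>B. \<forall>c\<in>C. T a b c = (\<Sum>l<r. x l a * y l b * z l c))"

text \<open>Index set of C^{nk}: pairs (i,p), i<n (block index), p<k (index within block).\<close>
definition vidx :: "nat \<Rightarrow> nat \<Rightarrow> (nat \<times> nat) set" where
  "vidx n k = {..<n} \<times> {..<k}"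

text \<open>Parameters of BTTB_{n,k}: (s,t) with |s| < n, |t| < k (a basis of the space).\<close>
definition bttb_params :: "nat \<Rightarrow> nat \<Rightarrow> (int \<times> int) set" where
  "bttb_params n k = {-(int n - 1)..int n - 1} \<times> {-(int k - 1)..int k - 1}"

definition bttb :: "(int \<Rightarrow> int \<Rightarrow> complex) \<Rightarrow> (nat \<times> nat) \<Rightarrow> (nat \<times> nat) \<Rightarrow> complex" where
  "bttb t = (\<lambda>(i,p) (j,q). t (int j - int i) (int q - int p))"

definition matvec :: "nat \<Rightarrow> nat \<Rightarrow> ((nat \<times> nat) \<Rightarrow> (nat \<times> nat) \<Rightarrow> complex)
    \<Rightarrow> ((nat \<times> nat) \<Rightarrow> complex) \<Rightarrow> (nat \<times> nat) \<Rightarrow> complex" where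
  "matvec n k M v = (\<lambda>r. \<Sum>c\<in>vidx n k. M r c * v c)"

text \<open>Structure tensor of BTTB_{n,k} x C^{nk} -> C^{nk}, in the standard bases:
  coefficient of e_r in (E_{(s,t)} * e_c), where E_{(s,t)} is the basis BTTB matrix.\<close>
definition bttb_struct_tensor ::
  "nat \<Rightarrow> nat \<Rightarrow> (int \<times> int) \<Rightarrow> (nat \<times> nat) \<Rightarrow> (nat \<times> nat) \<Rightarrow> complex" where
  "bttb_struct_tensor n k st c r =
     matvec n k (bttb (\<lambda>a b. if (a, b) = st then 1 else 0)) (\<lambda>c'. if c' = c then 1 else 0) r"

end

theory Submission imports Defs "HOL-Library.Function_Algebras" begin

lemma T_eq:
  assumes "c \<in> vidx n k"
  shows "bttb_struct_tensor n k st c r =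
    (if (int (fst c) - int (fst r), int (snd c) - int (snd r)) = st then 1 else 0)"
proof -
  have "bttb_struct_tensor n k st c r =
     (\<Sum>c'\<in>vidx n k. (if c' = c then bttb (\<lambda>a b. if (a, b) = st then 1 else 0) r c' else 0))"
    unfolding bttb_struct_tensor_def matvec_def by (intro sum.cong) auto
  also have "\<dots> = bttb (\<lambda>a b. if (a, b) = st then 1 else 0) r c"
    using assms by (simp add: vidx_def)
  finally show ?thesis by (simp add: bttb_def split: prod.splits)
qed

lemma sum_cis:
  fixes N :: nat and d :: int
  assumes "N > 0" "\<bar>d\<bar> < int N"
  shows "(\<Sum>l<N. cis (2 * pi * real l * of_int d / real N)) = (if d = 0 then of_nat N else 0)"
proof (cases "d = 0")
  case True then show ?thesis by simp
next
  case False
  define z where "z = cis (2 * pi * of_int d / real N)"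
  have e: "cis (2 * pi * real l * of_int d / real N) = z ^ l" for l
    unfolding z_def DeMoivre by (simp add: mult_ac)
  have zN: "z ^ N = 1" unfolding z_def DeMoivre using assms
    by (simp add: cis_multiple_2pi)
  have "z \<noteq> 1"
  proof
    assume "z = 1"
    then have "cos (2 * pi * of_int d / real N) = 1" unfolding z_def
      by (metis cis.sel(1) one_complex.sel(1))
    then obtain m :: int where m: "2 * pi * of_int d / real N = of_int m * 2 * pi"
      by (auto simp: cos_one_2pi_int)
    then have "real_of_int d = of_int m * real N" using assms by (simp add: field_simps)
    then have "d = m * int N" by (metis of_int_eq_iff of_int_mult of_int_of_nat_eq)
    then show False using assms False
      by (cases "m = 0") (auto simp: abs_mult intro: order.trans[OF _ mult_left_mono[of 1]] )
  qed
  then show ?thesis using False by (simp add: e geometric_sum zN)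
qed


lemma sum_mod_div:
  fixes F :: "nat \<Rightarrow> nat \<Rightarrow> complex"
  assumes "N > 0"
  shows "(\<Sum>l<N*M. F (l mod N) (l div N)) = (\<Sum>a<N. \<Sum>b<M. F a b)"
proof -
  have img: "(\<lambda>(a, b). a + N * b) ` ({..<N} \<times> {..<M}) \<subseteq> {..<N * M}"
  proof
    fix w assume "w \<in> (\<lambda>(a, b). a + N * b) ` ({..<N} \<times> {..<M})"
    then obtain a b where p: "w = a + N * b" "a < N" "b < M" by auto
    have "a + N * b < N + N * b" using p by simp
    also have "\<dots> = N * Suc b" by simp
    also have "\<dots> \<le> N * M" using p by (intro mult_le_mono2) simp
    finally show "w \<in> {..<N * M}" using p by simp
  qed
  have bij: "bij_betw (\<lambda>l. (l mod N, l div N)) {..<N*M} ({..<N} \<times> {..<M})"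
    by (rule bij_betw_byWitness[where f' = "\<lambda>(a,b). a + N * b"])
       (use img assms in \<open>auto simp: less_mult_imp_div_less mult.commute\<close>)
  have "(\<Sum>l<N*M. F (l mod N) (l div N)) = (\<Sum>(a,b)\<in>{..<N} \<times> {..<M}. F a b)"
    using sum.reindex_bij_betw[OF bij, of "\<lambda>(a,b). F a b"] by simp
  also have "\<dots> = (\<Sum>a<N. \<Sum>b<M. F a b)"
    by (simp add: sum.cartesian_product)
  finally show ?thesis .
qed

lemma upper:
  fixes n k :: nat
  assumes "n \<ge> 1" and "k \<ge> 1"
  shows "\<exists>(x :: nat \<Rightarrow> int \<times> int \<Rightarrow> complex) (y :: nat \<Rightarrow> nat \<times> nat \<Rightarrow> complex)
                 (z :: nat \<Rightarrow> nat \<times> nat \<Rightarrow> complex).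
        \<forall>a\<in>bttb_params n k. \<forall>b\<in>vidx n k. \<forall>c\<in>vidx n k.
          bttb_struct_tensor n k a b c = (\<Sum>l<(2 * k - 1) * (2 * n - 1). x l a * y l b * z l c)"
proof -
  define N where "N = 2 * n - 1"
  define M where "M = 2 * k - 1"
  have N: "N > 0" and M: "M > 0" using assms by (auto simp: N_def M_def)
  define f where "f l d = cis (2 * pi * real l * of_int d / real N)" for l :: nat and d :: int
  define g where "g l d = cis (2 * pi * real l * of_int d / real M)" for l :: nat and d :: int
  define x :: "nat \<Rightarrow> int \<times> int \<Rightarrow> complex" where
    "x l a = f (l mod N) (- fst a) * g (l div N) (- snd a) / (of_nat N * of_nat M)" for l a
  define y :: "nat \<Rightarrow> nat \<times> nat \<Rightarrow> complex" where
    "y l b = f (l mod N) (int (fst b)) * g (l div N) (int (snd b))" for l b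
  define z :: "nat \<Rightarrow> nat \<times> nat \<Rightarrow> complex" where
    "z l c = f (l mod N) (- int (fst c)) * g (l div N) (- int (snd c))" for l c
  have fadd: "f l d1 * f l d2 = f l (d1 + d2)" for l d1 d2
    unfolding f_def cis_mult of_int_add by (simp add: distrib_left distrib_right add_divide_distrib)
  have gadd: "g l d1 * g l d2 = g l (d1 + d2)" for l d1 d2
    unfolding g_def cis_mult of_int_add by (simp add: distrib_left distrib_right add_divide_distrib)
  show ?thesis
  proof (intro exI ballI)
    fix a b c assume a: "a \<in> bttb_params n k" and b: "b \<in> vidx n k" and c: "c \<in> vidx n k"
    obtain s t where st: "a = (s,t)" by (cases a)
    obtain j q where jq: "b = (j,q)" by (cases b)
    obtain i p where ip: "c = (i,p)" by (cases c)
    define d1 where "d1 = int j - int i - s"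
    define d2 where "d2 = int q - int p - t"
    have d1: "\<bar>d1\<bar> < int N" using a b c assms
      by (auto simp: d1_def N_def st jq ip bttb_params_def vidx_def)
    have d2: "\<bar>d2\<bar> < int M" using a b c assms
      by (auto simp: d2_def M_def st jq ip bttb_params_def vidx_def)
    have prod: "x l a * y l b * z l c = f (l mod N) d1 * g (l div N) d2 / (of_nat N * of_nat M)" for l
    proof -
      have "x l a * y l b * z l c =
        (f (l mod N) (- s) * f (l mod N) (int j) * f (l mod N) (- int i)) *
        (g (l div N) (- t) * g (l div N) (int q) * g (l div N) (- int p)) / (of_nat N * of_nat M)"
        by (simp add: x_def y_def z_def st jq ip)
      also have "\<dots> = f (l mod N) d1 * g (l div N) d2 / (of_nat N * of_nat M)"
        by (simp add: fadd gadd d1_def d2_def algebra_simps)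
      finally show ?thesis .
    qed
    have "(\<Sum>l<M * N. x l a * y l b * z l c) =
        (\<Sum>l<N * M. f (l mod N) d1 * g (l div N) d2) / (of_nat N * of_nat M)"
      unfolding prod by (simp add: sum_divide_distrib mult.commute)
    also have "\<dots> = (\<Sum>u<N. \<Sum>v<M. f u d1 * g v d2) / (of_nat N * of_nat M)"
      using sum_mod_div[OF N, of "\<lambda>u v. f u d1 * g v d2" M] by simp
    also have "\<dots> = (\<Sum>u<N. f u d1) * (\<Sum>v<M. g v d2) / (of_nat N * of_nat M)"
      by (simp add: sum_product)
    also have "\<dots> = (if d1 = 0 \<and> d2 = 0 then 1 else 0)"
      using sum_cis[OF N d1] sum_cis[OF M d2] N M by (simp add: f_def g_def)
    also have "\<dots> = bttb_struct_tensor n k a b c"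
      using T_eq[OF b] by (auto simp: st jq ip d1_def d2_def)
    finally show "bttb_struct_tensor n k a b c = (\<Sum>l<(2 * k - 1) * (2 * n - 1). x l a * y l b * z l c)"
      by (simp add: N_def M_def)
  qed
qed

lemma sum_fun_apply: "(\<Sum>i\<in>S. f i) x = (\<Sum>i\<in>S. (f i x :: complex))"
  by (induct S rule: infinite_finite_induct) auto

definition fscale :: "complex \<Rightarrow> (nat \<Rightarrow> complex) \<Rightarrow> nat \<Rightarrow> complex" where
  "fscale c f = (\<lambda>m. c * f m)"

interpretation fv: vector_space fscale
  by unfold_locales (auto simp: fscale_def fun_eq_iff algebra_simps)

lemma card_params:
  assumes "n \<ge> 1" "k \<ge> 1"
  shows "card (bttb_params n k) = (2 * k - 1) * (2 * n - 1)"
proof -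
  have "card (bttb_params n k) = nat (2 * int n - 1) * nat (2 * int k - 1)"
    unfolding bttb_params_def card_cartesian_product by simp
  also have "\<dots> = (2 * n - 1) * (2 * k - 1)" using assms by (simp add: nat_diff_distrib nat_mult_distrib)
  finally show ?thesis by simp
qed

lemma lower:
  fixes n k :: nat and x :: "nat \<Rightarrow> int \<times> int \<Rightarrow> complex"
    and y z :: "nat \<Rightarrow> nat \<times> nat \<Rightarrow> complex"
  assumes dec: "\<forall>a\<in>bttb_params n k. \<forall>b\<in>vidx n k. \<forall>c\<in>vidx n k.
          bttb_struct_tensor n k a b c = (\<Sum>l<r. x l a * y l b * z l c)"
  shows "card (bttb_params n k) \<le> r"
proof -
  define A where "A = bttb_params n k"
  define bw :: "int \<times> int \<Rightarrow> nat \<times> nat" where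
    "bw a = (nat (max (fst a) 0), nat (max (snd a) 0))" for a
  define cw :: "int \<times> int \<Rightarrow> nat \<times> nat" where
    "cw a = (nat (max (- fst a) 0), nat (max (- snd a) 0))" for a
  have bwv: "bw a \<in> vidx n k" if "a \<in> A" for a
    using that by (auto simp: A_def bw_def vidx_def bttb_params_def)
  have cwv: "cw a \<in> vidx n k" if "a \<in> A" for a
    using that by (auto simp: A_def cw_def vidx_def bttb_params_def)
  have Tw: "bttb_struct_tensor n k a' (bw a) (cw a) = (if a' = a then 1 else 0)" if "a \<in> A" for a a'
    using T_eq[OF bwv[OF that], of a' "cw a"]
    by (cases a; cases a') (auto simp: bw_def cw_def)
  define v where "v a = (\<lambda>l. if l < r then x l a else 0)" for a
  define phi where "phi a f = (\<Sum>l<r. f l * (y l (bw a) * z l (cw a)))" for a f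
  have phiv: "phi a (v a') = (if a' = a then 1 else 0)" if "a \<in> A" "a' \<in> A" for a a'
  proof -
    have "phi a (v a') = (\<Sum>l<r. x l a' * y l (bw a) * z l (cw a))"
      unfolding phi_def v_def by (intro sum.cong) (auto simp: mult_ac)
    also have "\<dots> = bttb_struct_tensor n k a' (bw a) (cw a)"
      using dec that bwv cwv by (simp add: A_def)
    finally show ?thesis using Tw[OF that(1)] by simp
  qed
  have inj: "inj_on v A"
  proof (rule inj_onI)
    fix a a' assume "a \<in> A" "a' \<in> A" "v a = v a'"
    then have "phi a (v a) = phi a (v a')" by simp
    then show "a = a'" using phiv[OF \<open>a \<in> A\<close> \<open>a \<in> A\<close>] phiv[OF \<open>a \<in> A\<close> \<open>a' \<in> A\<close>]
      by (auto split: if_splits)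
  qed
  have phi_lin: "phi a (\<Sum>u\<in>S. fscale (U u) u) = (\<Sum>u\<in>S. U u * phi a u)" if "finite S" for a S U
    unfolding phi_def sum_fun_apply fscale_def
    by (simp add: sum_distrib_left sum_distrib_right mult_ac sum.swap[of _ S])
  have indep: "fv.independent (v ` A)"
  proof
    assume "fv.dependent (v ` A)"
    then obtain S U where S: "finite S" "S \<subseteq> v ` A" "(\<Sum>u\<in>S. fscale (U u) u) = 0"
      and u: "\<exists>u\<in>S. U u \<noteq> 0"
      unfolding fv.dependent_explicit by blast
    from u obtain u where uS: "u \<in> S" and Uu: "U u \<noteq> 0" by blast
    then obtain a where a: "a \<in> A" "u = v a" using S by blast
    have "phi a (\<Sum>u\<in>S. fscale (U u) u) = (\<Sum>u'\<in>S. U u' * (if u' = u then 1 else 0))"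
      unfolding phi_lin[OF S(1)]
    proof (intro sum.cong refl)
      fix u' assume "u' \<in> S"
      then obtain a' where a': "a' \<in> A" "u' = v a'" using S by blast
      have "phi a u' = (if a' = a then 1 else 0)" using phiv[OF a(1) a'(1)] a' by simp
      also have "\<dots> = (if u' = u then 1 else 0)" using inj a a' by (auto simp: inj_on_eq_iff)
      finally show "U u' * phi a u' = U u' * (if u' = u then 1 else 0)" by simp
    qed
    also have "\<dots> = U u" using S(1) uS by (simp add: if_distrib sum.delta' cong: if_cong)
    finally have "phi a 0 = U u" using S(3) by simp
    then show False using Uu by (simp add: phi_def)
  qed
  define E where "E = (\<lambda>l. (\<lambda>m. if m = l then 1 else 0 :: complex)) ` {..<r}"
  have span: "v ` A \<subseteq> fv.span E"
  proof
    fix w assume "w \<in> v ` A"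
    then obtain a where w: "w = v a" by blast
    have "w = (\<Sum>l<r. fscale (x l a) (\<lambda>m. if m = l then 1 else 0))"
      unfolding w v_def fscale_def by (auto simp: fun_eq_iff sum_fun_apply if_distrib cong: if_cong)
    also have "\<dots> \<in> fv.span E"
      by (intro fv.span_sum fv.span_scale fv.span_base) (auto simp: E_def)
    finally show "w \<in> fv.span E" .
  qed
  have "card (v ` A) \<le> card E"
    using fv.independent_span_bound[OF _ indep span] by (simp add: E_def)
  also have "\<dots> \<le> r" unfolding E_def using card_image_le[of "{..<r}"] by simp
  finally show ?thesis using card_image[OF inj] by (simp add: A_def)
qed

theorem mainTheorem14:
  fixes n k :: nat
  assumes "n \<ge> 1" and "k \<ge> 1"
  shows "tensor_rank (bttb_params n k) (vidx n k) (vidx n k) (bttb_struct_tensor n k)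
           = (2 * k - 1) * (2 * n - 1)"
  unfolding tensor_rank_def
proof (rule Least_equality)
  show "\<exists>(x :: nat \<Rightarrow> int \<times> int \<Rightarrow> complex) (y :: nat \<Rightarrow> nat \<times> nat \<Rightarrow> complex)
                 (z :: nat \<Rightarrow> nat \<times> nat \<Rightarrow> complex).
        \<forall>a\<in>bttb_params n k. \<forall>b\<in>vidx n k. \<forall>c\<in>vidx n k.
          bttb_struct_tensor n k a b c = (\<Sum>l<(2 * k - 1) * (2 * n - 1). x l a * y l b * z l c)"
    by (rule upper[OF assms])
next
  fix r
  assume "\<exists>(x :: nat \<Rightarrow> int \<times> int \<Rightarrow> complex) (y :: nat \<Rightarrow> nat \<times> nat \<Rightarrow> complex)
                 (z :: nat \<Rightarrow> nat \<times> nat \<Rightarrow> complex).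
        \<forall>a\<in>bttb_params n k. \<forall>b\<in>vidx n k. \<forall>c\<in>vidx n k.
          bttb_struct_tensor n k a b c = (\<Sum>l<r. x l a * y l b * z l c)"
  then obtain x y z where "\<forall>a\<in>bttb_params n k. \<forall>b\<in>vidx n k. \<forall>c\<in>vidx n k.
          bttb_struct_tensor n k a b c = (\<Sum>l<r. x l a * y l b * z l c)" by blast
  from lower[OF this] show "(2 * k - 1) * (2 * n - 1) \<le> r"
    using card_params[OF assms] by simp
qed

end
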